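(* Let $\mathcal{H}$ be a Hilbert space of finite dimension $d\geq 2$ with orthonormal basis $\{\phi_k\}_{k=1}^d$. Define the instrument $\mathcal{I}$ on $\Omega=\{0,1\}$ by $\mathcal{I}_\omega(T)=L_\omega^* T L_\omega$, where $L_0=|\phi_d\rangle\langle\phi_d|$ and $L_1=\sum_{k=1}^{d-1}|\phi_{k+1}\rangle\langle\phi_k|$. Then: (a) If $1\leq n\leq d-1$, then $\mathsf{A}^\mathcal{I}_n\simeq\mathsf{P}_n$, where $\mathsf{P}_n$ is the sharp observable on $\{1,\ldots,n+1\}$ given by $\mathsf{P}_n(1)=\sum_{l=1}^{d-n}|\phi_l\rangle\langle\phi_l|$ and $\mathsf{P}_n(j)=|\phi_{d-n+j-1}\rangle\langle\phi_{d-n+j-1}|$ for $2\leq j\leq n+1$. (b) If $n\geq d-1$, then $\mathsf{A}^\mathcal{I}_n\simeq\mathsf{P}_{d-1}$, where $\mathsf{P}_{d-1}(j)=|\phi_j\rangle\langle\phi_j|$ for $1\leq j\leq d$.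
   Context: An observable with finite outcome set is a map $\omega\mapsto\mathsf{A}(\omega)$ into positive operators summing to $\mathbb{1}$; it is sharp if each $\mathsf{A}(\omega)$ is a projection. For finite-outcome observables, $\mathsf{A}\preceq\mathsf{B}$ means there is $\kappa:\Omega_\mathsf{A}\times\Omega_\mathsf{B}\to[0,1]$ with $\sum_\omega\kappa(\omega|\omega')=1$ for all $\omega'$ and $\mathsf{A}(\omega)=\sum_{\omega'}\kappa(\omega|\omega')\mathsf{B}(\omega')$; $\mathsf{A}\simeq\mathsf{B}$ means both $\mathsf{A}\preceq\mathsf{B}$ and $\mathsf{B}\preceq\mathsf{A}$. For an instrument $\mathcal{I}$, $\mathsf{A}^\mathcal{I}_n$ is the observable on $\Omega^n$ with $\mathsf{A}^\mathcal{I}_n(\omega_1,\ldots,\omega_n)=\mathcal{I}_{\omega_1}\circ\cdots\circ\mathcal{I}_{\omega_n}(\mathbb{1})$. *)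

theory Defs
  imports Complex_Main "Jordan_Normal_Form.Schur_Decomposition"
begin

text \<open>The Hilbert space is C^d with orthonormal basis the standard unit vectors.
  The paper's basis vector phi_k (k = 1..d) is the unit vector with index k - 1 here.\<close>

definition ketbra :: "nat \<Rightarrow> nat \<Rightarrow> nat \<Rightarrow> complex mat" where
  "ketbra d i j = mat d d (\<lambda>(a, b). if a = i \<and> b = j then 1 else 0)"

definition Lop :: "nat \<Rightarrow> nat \<Rightarrow> complex mat" where
  "Lop d \<omega> = (if \<omega> = 0 then ketbra d (d - 1) (d - 1)
              else mat d d (\<lambda>(a, b). \<Sum>k\<in>{1..d-1}. ketbra d k (k - 1) $$ (a, b)))"

definition instr :: "nat \<Rightarrow> nat \<Rightarrow> complex mat \<Rightarrow> complex mat" where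
  "instr d \<omega> T = mat_adjoint (Lop d \<omega>) * T * Lop d \<omega>"

definition outcomes_n :: "nat \<Rightarrow> nat list set" where
  "outcomes_n n = {ws. length ws = n \<and> set ws \<subseteq> {0, 1}}"

definition A_n :: "nat \<Rightarrow> nat list \<Rightarrow> complex mat" where
  "A_n d ws = foldr (instr d) ws (1\<^sub>m d)"

definition P_n :: "nat \<Rightarrow> nat \<Rightarrow> nat \<Rightarrow> complex mat" where
  "P_n d n j = (if j = 1
       then mat d d (\<lambda>(a, b). \<Sum>l\<in>{1..d-n}. ketbra d (l - 1) (l - 1) $$ (a, b))
       else ketbra d (d - n + j - 2) (d - n + j - 2))"

definition postproc :: "nat \<Rightarrow> 'a set \<Rightarrow> ('a \<Rightarrow> complex mat) \<Rightarrow> 'b set \<Rightarrow> ('b \<Rightarrow> complex mat) \<Rightarrow> bool" where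
  "postproc d \<Omega>A A \<Omega>B B \<longleftrightarrow>
     (\<exists>\<kappa> :: 'a \<Rightarrow> 'b \<Rightarrow> real.
        (\<forall>\<omega>\<in>\<Omega>A. \<forall>\<omega>'\<in>\<Omega>B. 0 \<le> \<kappa> \<omega> \<omega>' \<and> \<kappa> \<omega> \<omega>' \<le> 1) \<and>
        (\<forall>\<omega>'\<in>\<Omega>B. (\<Sum>\<omega>\<in>\<Omega>A. \<kappa> \<omega> \<omega>') = 1) \<and>
        (\<forall>\<omega>\<in>\<Omega>A. A \<omega> = mat d d (\<lambda>(a, b). \<Sum>\<omega>'\<in>\<Omega>B. complex_of_real (\<kappa> \<omega> \<omega>') * B \<omega>' $$ (a, b))))"

definition obs_equiv :: "nat \<Rightarrow> 'a set \<Rightarrow> ('a \<Rightarrow> complex mat) \<Rightarrow> 'b set \<Rightarrow> ('b \<Rightarrow> complex mat) \<Rightarrow> bool" where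
  "obs_equiv d \<Omega>A A \<Omega>B B \<longleftrightarrow> postproc d \<Omega>A A \<Omega>B B \<and> postproc d \<Omega>B B \<Omega>A A"

end

theory Submission
  imports Defs
begin


lemma adj_mat: "mat_adjoint (mat d d f) = mat d d (\<lambda>(i,j). cnj (f (j,i)))"
  by (rule eq_matI) (auto simp: mat_adjoint_def mat_of_rows_def)


lemma sum_single: "(c::nat) < d \<Longrightarrow> (\<And>i. i < d \<Longrightarrow> i \<noteq> c \<Longrightarrow> f i = 0) \<Longrightarrow> (\<Sum>i = 0..<d. f i) = (f c :: complex)"
proof -
  assume a: "c < d" "\<And>i. i < d \<Longrightarrow> i \<noteq> c \<Longrightarrow> f i = 0"
  have "(\<Sum>i = 0..<d. f i) = f c + sum f ({0..<d}-{c})" using a by (intro sum.remove) auto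
  also have "sum f ({0..<d}-{c}) = 0" using a by (intro sum.neutral) auto
  finally show ?thesis by simp
qed

definition diagm :: "nat \<Rightarrow> (nat \<Rightarrow> bool) \<Rightarrow> complex mat" where
  "diagm d s = mat d d (\<lambda>(a,b). if a = b \<and> s a then 1 else 0)"

lemma diagm_cong: "(\<And>i. i < d \<Longrightarrow> s i = t i) \<Longrightarrow> diagm d s = diagm d t"
  by (rule eq_matI) (auto simp: diagm_def)

lemma Lop0: "Lop d 0 = mat d d (\<lambda>(a,b). if a = d-1 \<and> b = d-1 then 1 else 0)"
  by (simp add: Lop_def ketbra_def)

lemma sum_shift: "a < d \<Longrightarrow> b < d \<Longrightarrow> (\<Sum>k\<in>{1..d-1}. (if a = k \<and> b = k - 1 then 1 else 0::complex)) = (if a = Suc b then 1 else 0)"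
proof -
  assume "a < d" "b < d"
  have "(\<Sum>k\<in>{1..d-1}. (if a = k \<and> b = k - 1 then 1 else 0::complex)) = (\<Sum>k\<in>{1..d-1}. (if k = a then (if b = k - 1 then 1 else 0) else 0::complex))"
    by (rule sum.cong) auto
  also have "\<dots> = (if a = Suc b then 1 else 0)" using \<open>a<d\<close> \<open>b<d\<close> by (auto simp: sum.delta)
  finally show ?thesis .
qed

lemma Lop1: "\<omega> \<noteq> 0 \<Longrightarrow> Lop d \<omega> = mat d d (\<lambda>(a,b). if a = Suc b then 1 else 0)"
  apply (rule eq_matI) using sum_shift[of _ d] by (auto simp: Lop_def ketbra_def)

lemma instr0: "instr d 0 (diagm d s) = diagm d (\<lambda>i. i = d - 1 \<and> s i)"
  apply (rule eq_matI)
  apply (auto simp: instr_def Lop0 adj_mat diagm_def scalar_prod_def sum.delta if_distrib cong: if_cong)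
  apply (subst sum_single[where c="d - Suc 0"]; auto)
  apply (rule sum.neutral; auto)
  done

lemma instr1: "\<omega> \<noteq> 0 \<Longrightarrow> instr d \<omega> (diagm d s) = diagm d (\<lambda>i. Suc i < d \<and> s (Suc i))"
  apply (rule eq_matI)
  apply (auto simp: instr_def Lop1 adj_mat diagm_def scalar_prod_def sum.delta if_distrib cong: if_cong)
  apply (subst sum_single[where c="Suc j" for j]; auto)
  done

fun surv :: "nat \<Rightarrow> nat list \<Rightarrow> nat \<Rightarrow> bool" where
  "surv d [] i = (i < d)"
| "surv d (w#ws) i = (if w = 0 then i = d - 1 \<and> surv d ws i else Suc i < d \<and> surv d ws (Suc i))"

lemma surv_lt: "surv d ws i \<Longrightarrow> i < d"
  by (induction ws arbitrary: i) (auto split: if_splits)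

lemma A_n_surv: "A_n d ws = diagm d (surv d ws)"
proof (induction ws)
  case Nil
  show ?case by (rule eq_matI) (auto simp: A_n_def diagm_def)
next
  case (Cons w ws)
  have "A_n d (w#ws) = instr d w (A_n d ws)" by (simp add: A_n_def)
  also have "\<dots> = instr d w (diagm d (surv d ws))" using Cons by simp
  also have "\<dots> = diagm d (surv d (w#ws))"
    by (cases "w = 0") (auto simp: instr0 instr1 intro!: diagm_cong)
  finally show ?case .
qed

lemma surv_0: "surv d (0#ws) i \<Longrightarrow> i = d - 1 \<and> (\<forall>w\<in>set ws. w = 0)"
proof (induction ws arbitrary: i)
  case Nil then show ?case by simp
next
  case (Cons w ws)
  then show ?case using surv_lt[of d ws] by (cases "w = 0") auto
qed

definition word :: "nat \<Rightarrow> nat \<Rightarrow> nat list" where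
  "word m n = replicate m 1 @ replicate (n - m) 0"

lemma all0_rep: "\<forall>w\<in>set ws. w = (0::nat) \<Longrightarrow> ws = replicate (length ws) 0"
  by (induction ws) auto

lemma surv_form: "set ws \<subseteq> {0,1} \<Longrightarrow> surv d ws i \<Longrightarrow> \<exists>m \<le> length ws. ws = word m (length ws)"
proof (induction ws arbitrary: i)
  case Nil then show ?case by (auto simp: word_def)
next
  case (Cons w ws)
  show ?case
  proof (cases "w = 0")
    case True
    then have "\<forall>w\<in>set ws. w = 0" using surv_0 Cons.prems by blast
    then have "ws = replicate (length ws) 0" by (rule all0_rep)
    then show ?thesis using True by (intro exI[of _ 0]) (auto simp: word_def)
  next
    case False
    then have w1: "w = 1" using Cons.prems by auto
    from Cons.prems False have "surv d ws (Suc i)" by auto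
    with Cons.IH Cons.prems obtain m where "m \<le> length ws" "ws = word m (length ws)" by auto
    then show ?thesis using w1 by (intro exI[of _ "Suc m"]) (auto simp: word_def)
  qed
qed

lemma surv_ones: "surv d (replicate m 1 @ ws) i \<longleftrightarrow> i + m < d \<and> surv d ws (i + m)"
proof (induction m arbitrary: i)
  case 0
  then show ?case using surv_lt[of d ws i] by auto
next
  case (Suc m)
  have "surv d (replicate (Suc m) 1 @ ws) i = (Suc i < d \<and> surv d (replicate m 1 @ ws) (Suc i))" by simp
  also have "\<dots> = (Suc i < d \<and> Suc i + m < d \<and> surv d ws (Suc i + m))" using Suc by simp
  also have "\<dots> = (i + Suc m < d \<and> surv d ws (i + Suc m))" by auto
  finally show ?case .
qed

lemma surv_zeros: "k > 0 \<Longrightarrow> surv d (replicate k 0) j \<longleftrightarrow> j = d - 1 \<and> 0 < d"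
proof (induction k)
  case 0 then show ?case by simp
next
  case (Suc k) then show ?case by (cases k) auto
qed

lemma surv_word: "m \<le> n \<Longrightarrow> surv d (word m n) i \<longleftrightarrow> (if m < n then i + m + 1 = d else i + m < d)"
  unfolding word_def surv_ones by (auto simp: surv_zeros)

lemma word_inj: "word m n = word m' n \<Longrightarrow> m \<le> n \<Longrightarrow> m' \<le> n \<Longrightarrow> m = m'"
proof -
  assume "word m n = word m' n" "m \<le> n" "m' \<le> n"
  then have "sum_list (word m n) = sum_list (word m' n)" by simp
  then show "m = m'" by (simp add: word_def sum_list_replicate)
qed

lemma word_out: "m \<le> n \<Longrightarrow> word m n \<in> outcomes_n n"
  by (auto simp: word_def outcomes_n_def)

lemma finite_out: "finite (outcomes_n n)"
proof -
  have "outcomes_n n = {xs. set xs \<subseteq> {0,1} \<and> length xs = n}" by (auto simp: outcomes_n_def)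
  then show ?thesis using finite_lists_length_eq[of "{0,1::nat}" n] by simp
qed

lemma diagm_carrier: "diagm d s \<in> carrier_mat d d" by (simp add: diagm_def)

lemma diagm_false: "(\<And>i. i < d \<Longrightarrow> \<not> s i) \<Longrightarrow> diagm d s = 0\<^sub>m d d"
  by (rule eq_matI) (auto simp: diagm_def)

lemma ketbra_diagm: "ketbra d c c = diagm d (\<lambda>i. i = c)"
  by (rule eq_matI) (auto simp: ketbra_def diagm_def)

lemma sum_first_gen: "(\<Sum>l\<in>{1..(k::nat)}. f (l - 1)) = (\<Sum>l\<in>{0..<k}. (f l :: complex))"
proof (cases k)
  case 0 then show ?thesis by simp
next
  case (Suc k')
  have "(\<Sum>l\<in>{Suc 0..Suc k'}. f (l - 1)) = (\<Sum>l\<in>{0..k'}. f (Suc l - 1))"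
    by (rule sum.shift_bounds_cl_Suc_ivl)
  also have "\<dots> = (\<Sum>l\<in>{0..<Suc k'}. f l)" by (simp add: atLeastLessThanSuc_atLeastAtMost)
  finally show ?thesis using Suc by simp
qed

lemma sum_first: "(\<lambda>(a,b). \<Sum>l\<in>{1..k}. ketbra d (l - 1) (l - 1) $$ (a,b)) = (\<lambda>(a,b). \<Sum>l\<in>{0..<k}. ketbra d l l $$ (a,b))"
proof (rule ext, clarify)
  fix a b
  show "(\<Sum>l\<in>{1..k}. ketbra d (l - 1) (l - 1) $$ (a,b)) = (\<Sum>l\<in>{0..<k}. ketbra d l l $$ (a,b))"
    using sum_first_gen[of "\<lambda>l. ketbra d l l $$ (a,b)" k] by simp
qed

lemma sum_first2: "a < d \<Longrightarrow> b < d \<Longrightarrow> (\<Sum>l\<in>{0..<k}. ketbra d l l $$ (a,b)) = (if a = b \<and> a < k then 1 else 0)"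
proof -
  assume "a < d" "b < d"
  then have "(\<Sum>l\<in>{0..<k}. ketbra d l l $$ (a,b)) = (\<Sum>l\<in>{0..<k}. if l = a then (if a = b then 1 else 0) else 0)"
    by (intro sum.cong) (auto simp: ketbra_def)
  then show ?thesis by (simp add: sum.delta)
qed

lemma P1: "P_n d n 1 = diagm d (\<lambda>a. a < d - n)"
proof -
  have "P_n d n 1 = mat d d (\<lambda>(a,b). \<Sum>l\<in>{0..<d-n}. ketbra d l l $$ (a,b))"
    unfolding P_n_def sum_first by simp
  also have "\<dots> = diagm d (\<lambda>a. a < d - n)"
    by (rule eq_matI) (auto simp: diagm_def sum_first2)
  finally show ?thesis .
qed

lemma Pj: "j \<noteq> 1 \<Longrightarrow> P_n d n j = diagm d (\<lambda>a. a = d - n + j - 2)"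
  by (simp add: P_n_def ketbra_diagm)


lemma sum_one: "finite S \<Longrightarrow> c \<in> S \<Longrightarrow> (\<And>x. x \<in> S \<Longrightarrow> x \<noteq> c \<Longrightarrow> f x = 0) \<Longrightarrow> sum f S = (f c :: 'b::comm_monoid_add)"
proof -
  assume a: "finite S" "c \<in> S" "\<And>x. x \<in> S \<Longrightarrow> x \<noteq> c \<Longrightarrow> f x = 0"
  have "sum f S = f c + sum f (S - {c})" using a by (intro sum.remove) auto
  also have "sum f (S - {c}) = 0" using a by (intro sum.neutral) auto
  finally show ?thesis by simp
qed

lemma equiv_gen:
  assumes fA: "finite \<Omega>A" and fB: "finite \<Omega>B" and ne: "jz \<in> \<Omega>B"
    and g: "\<And>j. j \<in> \<Omega>B \<Longrightarrow> g j \<in> \<Omega>A" and inj: "inj_on g \<Omega>B"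
    and AB: "\<And>j. j \<in> \<Omega>B \<Longrightarrow> A (g j) = B j"
    and Z: "\<And>\<omega>. \<omega> \<in> \<Omega>A \<Longrightarrow> \<omega> \<notin> g ` \<Omega>B \<Longrightarrow> A \<omega> = 0\<^sub>m d d"
    and cA: "\<And>\<omega>. \<omega> \<in> \<Omega>A \<Longrightarrow> A \<omega> \<in> carrier_mat d d"
    and cB: "\<And>j. j \<in> \<Omega>B \<Longrightarrow> B j \<in> carrier_mat d d"
  shows "obs_equiv d \<Omega>A A \<Omega>B B"
  unfolding obs_equiv_def
proof
  show "postproc d \<Omega>A A \<Omega>B B"
    unfolding postproc_def
  proof (intro exI[of _ "\<lambda>\<omega> j. if \<omega> = g j then 1 else 0"] conjI ballI)
    fix j assume j: "j \<in> \<Omega>B"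
    show "(\<Sum>\<omega>\<in>\<Omega>A. if \<omega> = g j then 1 else 0) = (1::real)"
      using g[OF j] fA by (simp add: sum.delta)
  next
    fix \<omega> assume w: "\<omega> \<in> \<Omega>A"
    show "A \<omega> = mat d d (\<lambda>(a, b). \<Sum>j\<in>\<Omega>B. complex_of_real (if \<omega> = g j then 1 else 0) * B j $$ (a, b))"
    proof (cases "\<omega> \<in> g ` \<Omega>B")
      case True
      then obtain j1 where j1: "j1 \<in> \<Omega>B" "\<omega> = g j1" by auto
      have S: "(\<Sum>j\<in>\<Omega>B. complex_of_real (if \<omega> = g j then 1 else 0) * B j $$ (a, b)) = B j1 $$ (a,b)" for a b
      proof -
        have "(\<Sum>j\<in>\<Omega>B. complex_of_real (if \<omega> = g j then 1 else 0) * B j $$ (a, b)) = complex_of_real (if \<omega> = g j1 then 1 else 0) * B j1 $$ (a, b)"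
        proof (rule sum_one[OF fB j1(1), where f="\<lambda>j. complex_of_real (if \<omega> = g j then 1 else 0) * B j $$ (a, b)"])
          fix x assume x: "x \<in> \<Omega>B" "x \<noteq> j1"
          have "g x \<noteq> g j1" by (rule inj_on_contraD[OF inj x(2) x(1) j1(1)])
          then show "complex_of_real (if \<omega> = g x then 1 else 0) * B x $$ (a, b) = 0" using j1(2) by simp
        qed
        then show ?thesis using j1(2) by simp
      qed
      have "A \<omega> = B j1" using AB[OF j1(1)] j1(2) by simp
      also have "B j1 = mat d d (\<lambda>(a, b). B j1 $$ (a,b))"
        using cB[OF j1(1)] by (intro eq_matI) auto
      also have "\<dots> = mat d d (\<lambda>(a, b). \<Sum>j\<in>\<Omega>B. complex_of_real (if \<omega> = g j then 1 else 0) * B j $$ (a, b))"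
        by (simp only: S)
      finally show ?thesis .
    next
      case False
      then have "\<And>a b. (\<Sum>j\<in>\<Omega>B. complex_of_real (if \<omega> = g j then 1 else 0) * B j $$ (a, b)) = 0"
        by (intro sum.neutral) auto
      then show ?thesis using Z[OF w False] by (intro eq_matI) auto
    qed
  qed simp_all
next
  let ?k = "\<lambda>j \<omega>. if \<omega> \<in> g ` \<Omega>B then (if \<omega> = g j then 1 else 0) else (if j = jz then 1 else (0::real))"
  have K1: "\<forall>j\<in>\<Omega>B. \<forall>\<omega>\<in>\<Omega>A. 0 \<le> ?k j \<omega> \<and> ?k j \<omega> \<le> 1" by simp
  have K2: "\<forall>\<omega>\<in>\<Omega>A. (\<Sum>j\<in>\<Omega>B. ?k j \<omega>) = 1"
  proof
    fix \<omega> assume w: "\<omega> \<in> \<Omega>A"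
    show "(\<Sum>j\<in>\<Omega>B. ?k j \<omega>) = 1"
    proof (cases "\<omega> \<in> g ` \<Omega>B")
      case True
      then obtain j1 where j1: "j1 \<in> \<Omega>B" "\<omega> = g j1" by auto
      have "(\<Sum>j\<in>\<Omega>B. ?k j \<omega>) = ?k j1 \<omega>"
      proof (rule sum_one[OF fB j1(1), where f="\<lambda>j. ?k j \<omega>"])
        fix x assume x: "x \<in> \<Omega>B" "x \<noteq> j1"
        have "g x \<noteq> g j1" by (rule inj_on_contraD[OF inj x(2) x(1) j1(1)])
        then show "?k x \<omega> = 0" using j1 by simp
      qed
      also have "?k j1 \<omega> = 1" using True j1(2) by simp
      finally show ?thesis .
    next
      case False
      then have "(\<Sum>j\<in>\<Omega>B. ?k j \<omega>) = (\<Sum>j\<in>\<Omega>B. if j = jz then 1 else 0)" by simp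
      also have "\<dots> = 1" using fB ne by (simp add: sum.delta)
      finally show ?thesis .
    qed
  qed
  have K3: "\<forall>j\<in>\<Omega>B. B j = mat d d (\<lambda>(a, b). \<Sum>\<omega>\<in>\<Omega>A. complex_of_real (?k j \<omega>) * A \<omega> $$ (a, b))"
  proof
    fix j assume j: "j \<in> \<Omega>B"
    have S: "(\<Sum>\<omega>\<in>\<Omega>A. complex_of_real (?k j \<omega>) * A \<omega> $$ (a, b)) = B j $$ (a,b)" if ab: "a < d" "b < d" for a b
    proof -
      have "(\<Sum>\<omega>\<in>\<Omega>A. complex_of_real (?k j \<omega>) * A \<omega> $$ (a, b)) = complex_of_real (?k j (g j)) * A (g j) $$ (a, b)"
      proof (rule sum_one[OF fA g[OF j], where f="\<lambda>\<omega>. complex_of_real (?k j \<omega>) * A \<omega> $$ (a, b)"])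
        fix x assume x: "x \<in> \<Omega>A" "x \<noteq> g j"
        show "complex_of_real (?k j x) * A x $$ (a, b) = 0"
        proof (cases "x \<in> g ` \<Omega>B")
          case True then show ?thesis using x(2) by simp
        next
          case False
          have "A x $$ (a,b) = 0" using Z[OF x(1) False] ab by simp
          then show ?thesis by simp
        qed
      qed
      also have "\<dots> = B j $$ (a,b)" using j AB[OF j] by simp
      finally show ?thesis .
    qed
    show "B j = mat d d (\<lambda>(a, b). \<Sum>\<omega>\<in>\<Omega>A. complex_of_real (?k j \<omega>) * A \<omega> $$ (a, b))"
    proof (rule eq_matI)
      fix a b assume "a < dim_row (mat d d (\<lambda>(a, b). \<Sum>\<omega>\<in>\<Omega>A. complex_of_real (?k j \<omega>) * A \<omega> $$ (a, b)))"
        "b < dim_col (mat d d (\<lambda>(a, b). \<Sum>\<omega>\<in>\<Omega>A. complex_of_real (?k j \<omega>) * A \<omega> $$ (a, b)))"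
      then have ab: "a < d" "b < d" by (simp_all only: dim_row_mat dim_col_mat)
      have "mat d d (\<lambda>(a, b). \<Sum>\<omega>\<in>\<Omega>A. complex_of_real (?k j \<omega>) * A \<omega> $$ (a, b)) $$ (a,b) = (\<Sum>\<omega>\<in>\<Omega>A. complex_of_real (?k j \<omega>) * A \<omega> $$ (a, b))"
        using ab by (simp only: index_mat case_prod_conv)
      also have "\<dots> = B j $$ (a,b)" by (rule S[OF ab])
      finally show "B j $$ (a,b) = mat d d (\<lambda>(a, b). \<Sum>\<omega>\<in>\<Omega>A. complex_of_real (?k j \<omega>) * A \<omega> $$ (a, b)) $$ (a,b)" by (rule sym)
    qed (simp_all only: carrier_matD[OF cB[OF j]] dim_row_mat dim_col_mat)
  qed
  show "postproc d \<Omega>B B \<Omega>A A"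
    unfolding postproc_def by (rule exI[of _ ?k], intro conjI, rule K1, rule K2, rule K3)
qed

lemma A_word: "m \<le> n \<Longrightarrow> A_n d (word m n) = diagm d (\<lambda>i. if m < n then i + m + 1 = d else i + m < d)"
  unfolding A_n_surv by (rule diagm_cong) (simp add: surv_word)

lemma A_zero:
  assumes "ws \<in> outcomes_n n" "\<And>m i. m \<le> n \<Longrightarrow> ws = word m n \<Longrightarrow> i < d \<Longrightarrow> surv d ws i \<Longrightarrow> False"
  shows "A_n d ws = 0\<^sub>m d d"
  unfolding A_n_surv
proof (rule diagm_false)
  fix i assume i: "i < d"
  show "\<not> surv d ws i"
  proof
    assume sv: "surv d ws i"
    have "set ws \<subseteq> {0,1}" "length ws = n" using assms(1) by (auto simp: outcomes_n_def)
    with surv_form[OF _ sv] obtain m where "m \<le> n" "ws = word m n" by auto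
    with assms(2) i sv show False by blast
  qed
qed

lemma P_carrier: "P_n d n j \<in> carrier_mat d d"
proof (cases "j = 1")
  case True then show ?thesis using P1[of d n] diagm_carrier by metis
next
  case False then show ?thesis using Pj[of j d n] diagm_carrier by metis
qed

lemma case_a:
  assumes n: "1 \<le> n" "n \<le> d - 1"
  shows "obs_equiv d (outcomes_n n) (A_n d) {1..n+1} (P_n d n)"
proof -
  define mm where "mm j = (if j \<le> 1 then n else n + 1 - j)" for j :: nat
  define g where "g j = word (mm j) n" for j
  have mmle: "mm j \<le> n" for j unfolding mm_def by auto
  show ?thesis
  proof (rule equiv_gen[where g = g and jz = 1])
    show "finite (outcomes_n n)" by (rule finite_out)
    show "finite {1..n+1}" by simp
    show "1 \<in> {1..n+1}" by simp
    show "g j \<in> outcomes_n n" for j unfolding g_def by (rule word_out[OF mmle])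
    show "inj_on g {1..n+1}"
    proof (rule inj_onI)
      fix x y assume x: "x \<in> {1..n+1}" and y: "y \<in> {1..n+1}" and e: "g x = g y"
      then have "mm x = mm y" unfolding g_def using word_inj mmle by blast
      then show "x = y" using x y by (auto simp: mm_def split: if_splits)
    qed
    show "A_n d (g j) = P_n d n j" if j: "j \<in> {1..n+1}" for j
    proof -
      have A: "A_n d (g j) = diagm d (\<lambda>i. if mm j < n then i + mm j + 1 = d else i + mm j < d)"
        unfolding g_def by (rule A_word[OF mmle])
      show ?thesis
      proof (cases "j = 1")
        case True
        then have mj: "mm j = n" by (simp add: mm_def)
        have "A_n d (g j) = diagm d (\<lambda>a. a < d - n)" unfolding A mj using n by (intro diagm_cong) auto
        also have "\<dots> = P_n d n j" unfolding True by (rule P1[symmetric])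
        finally show ?thesis .
      next
        case False
        then have mj: "mm j = n + 1 - j" and jj: "2 \<le> j" "j \<le> n + 1" using j by (auto simp: mm_def)
        have "A_n d (g j) = diagm d (\<lambda>a. a = d - n + j - 2)" unfolding A mj using n jj by (intro diagm_cong) auto
        also have "\<dots> = P_n d n j" by (rule Pj[symmetric, OF False])
        finally show ?thesis .
      qed
    qed
    show "A_n d w = 0\<^sub>m d d" if w: "w \<in> outcomes_n n" "w \<notin> g ` {1..n+1}" for w
    proof (rule A_zero[OF w(1)])
      fix m i assume m: "m \<le> n" "w = word m n"
      show False
      proof (cases "m = n")
        case True
        then have "w = g 1" using m by (simp add: g_def mm_def)
        then show False using w(2) by auto
      next
        case False
        then have "w = g (n + 1 - m)" "n + 1 - m \<in> {1..n+1}" using m by (auto simp: g_def mm_def)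
        then show False using w(2) by blast
      qed
    qed
    show "A_n d w \<in> carrier_mat d d" for w by (simp add: A_n_surv diagm_carrier)
    show "P_n d n j \<in> carrier_mat d d" for j by (rule P_carrier)
  qed
qed

lemma case_b:
  assumes d: "d \<ge> 2" and n: "d - 1 \<le> n"
  shows "obs_equiv d (outcomes_n n) (A_n d) {1..d} (P_n d (d - 1))"
proof -
  define g where "g j = word (d - j) n" for j
  show ?thesis
  proof (rule equiv_gen[where g = g and jz = 1])
    show "finite (outcomes_n n)" by (rule finite_out)
    show "finite {1..d}" by simp
    show "1 \<in> {1..d}" using d by simp
    show "g j \<in> outcomes_n n" if "j \<in> {1..d}" for j unfolding g_def using that n by (intro word_out) auto
    show "inj_on g {1..d}"
    proof (rule inj_onI)
      fix x y assume x: "x \<in> {1..d}" and y: "y \<in> {1..d}" and e: "g x = g y"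
      then have "d - x = d - y" unfolding g_def using word_inj n by (metis atLeastAtMost_iff diff_le_mono2 le_trans)
      then show "x = y" using x y by auto
    qed
    show "A_n d (g j) = P_n d (d - 1) j" if j: "j \<in> {1..d}" for j
    proof -
      have A0: "A_n d (g j) = diagm d (\<lambda>i. if d - j < n then i + (d - j) + 1 = d else i + (d - j) < d)"
        unfolding g_def by (rule A_word) (use n j in auto)
      have A: "A_n d (g j) = diagm d (\<lambda>i. i = j - 1)"
        unfolding A0 using j n by (intro diagm_cong) auto
      show ?thesis
      proof (cases "j = 1")
        case True
        have "P_n d (d - 1) j = diagm d (\<lambda>a. a < d - (d - 1))" unfolding True by (rule P1)
        also have "\<dots> = diagm d (\<lambda>i. i = j - 1)" using d True by (intro diagm_cong) auto
        finally show ?thesis using A by simp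
      next
        case False
        have "P_n d (d - 1) j = diagm d (\<lambda>a. a = d - (d - 1) + j - 2)" by (rule Pj[OF False])
        also have "\<dots> = diagm d (\<lambda>i. i = j - 1)" using d False j by (intro diagm_cong) auto
        finally show ?thesis using A by simp
      qed
    qed
    show "A_n d w = 0\<^sub>m d d" if w: "w \<in> outcomes_n n" "w \<notin> g ` {1..d}" for w
    proof (rule A_zero[OF w(1)])
      fix m i assume m: "m \<le> n" "w = word m n" and i: "i < d" and sv: "surv d w i"
      have "m < d" using sv m surv_word[OF m(1), of d i] by (auto split: if_splits)
      then have "w = g (d - m)" "d - m \<in> {1..d}" using m by (auto simp: g_def)
      then show False using w(2) by blast
    qed
    show "A_n d w \<in> carrier_mat d d" for w by (simp add: A_n_surv diagm_carrier)
    show "P_n d (d - 1) j \<in> carrier_mat d d" for j by (rule P_carrier)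
  qed
qed

theorem proposition3:
  fixes d :: nat
  assumes "d \<ge> 2"
  shows "\<forall>n::nat.
           (1 \<le> n \<and> n \<le> d - 1 \<longrightarrow>
              obs_equiv d (outcomes_n n) (A_n d) {1..n+1} (P_n d n)) \<and>
           (d - 1 \<le> n \<longrightarrow>
              obs_equiv d (outcomes_n n) (A_n d) {1..d} (P_n d (d - 1)))"
  using case_a case_b assms by blast

end
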